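(* Let $\mathcal{AF}_{\vdash}=(\vdash,\overline{\cdot},\widehat{\cdot})$ be a setting such that $\vdash$ satisfies Cut and $\widehat{\cdot}$ is pointed. Let $\mathcal{S}\subseteq\mathcal{L}$ and $\phi\in\mathcal{L}$ with $\mathcal{S}\mathrel{\mid\!\sim}^{\mathcal{AF}_{\vdash}}_{\mathsf{Grd}}\phi$. Then: (1) there is an argument $(\Phi,\phi)\in\mathsf{Grd}(\mathcal{AF}_{\vdash}(\mathcal{S}))$; (2) $\mathsf{Grd}(\mathcal{AF}_{\vdash}(\mathcal{S}))\subseteq\mathsf{Grd}(\mathcal{AF}_{\vdash^{+\phi}}(\mathcal{S}))$; (3) $\mathsf{Grd}(\mathcal{AF}_{\vdash^{+\phi}}(\mathcal{S}))\cap\mathit{Arg}_{\vdash}(\mathcal{S})=\mathsf{Grd}(\mathcal{AF}_{\vdash}(\mathcal{S}))$; (4) with $\Phi$ as in (1), for every $a=(\Gamma,\gamma)\in\mathsf{Grd}(\mathcal{AF}_{\vdash^{+\phi}}(\mathcal{S}))\setminus\mathit{Arg}_{\vdash}(\mathcal{S})$ we have $(\Gamma\cup\Phi,\gamma)\in\mathsf{Grd}(\mathcal{AF}_{\vdash}(\mathcal{S}))$.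
   Context: $\mathcal{L}$ is a set of formulas, $\wp_{\sf fin}(X)$ the finite subsets of $X$. A setting is $(\vdash,\overline{\cdot},\widehat{\cdot})$ with ${\vdash}\subseteq\wp_{\sf fin}(\mathcal{L})\times\mathcal{L}$ arbitrary, $\overline{\cdot}:\mathcal{L}\to\wp(\mathcal{L})$, $\widehat{\cdot}$ assigning to each nonempty finite set of formulas a finite set of formulas, with $\widehat{\emptyset}=\emptyset$. $\mathit{Arg}_{\vdash}(\mathcal{S})=\{(\Gamma,\gamma):\Gamma\subseteq\mathcal{S}\text{ finite},\Gamma\vdash\gamma\}$; in $\mathcal{AF}_{\vdash}(\mathcal{S})$, $(\Gamma,\gamma)$ attacks $(\Gamma',\gamma')$ iff $\gamma\in\overline{\psi}$ for some $\psi\in\widehat{\Gamma'}$. A complete extension is a conflict-free set of arguments that defends each member (every attacker of a member is attacked by a member) and contains every argument it defends; $\mathsf{Grd}(\mathcal{AF}_{\vdash}(\mathcal{S}))$ is the $\subseteq$-minimal complete extension. $\mathcal{S}\mathrel{\mid\!\sim}^{\mathcal{AF}_{\vdash}}_{\mathsf{Grd}}\phi$ iff the grounded extension contains an argument with conclusion $\phi$. $\vdash^{+\phi}$ is the transitive closure of ${\vdash}\cup\{(\emptyset,\phi)\}$ and $\mathcal{AF}_{\vdash^{+\phi}}=(\vdash^{+\phi},\overline{\cdot},\widehat{\cdot})$. $\vdash$ satisfies Cut iff for every $\phi\in\mathcal{L}$ and all finite $\Gamma,\Delta$ and $\gamma$: if $\Gamma\vdash\phi$ and $\Delta\vdash^{+\phi}\gamma$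 then $\Gamma\cup\Delta\vdash\gamma$. $\widehat{\cdot}$ is pointed iff $\widehat{\Gamma\cup\Delta}=\widehat{\Gamma}\cup\widehat{\Delta}$ for all finite $\Gamma,\Delta$. *)

theory Defs
  imports Main
begin

type_synonym 'f crel = "'f set \<Rightarrow> 'f \<Rightarrow> bool"
type_synonym 'f arg = "'f set \<times> 'f"

inductive tclos :: "'f crel \<Rightarrow> 'f crel" for R :: "'f crel" where
  base: "R \<Gamma> \<gamma> \<Longrightarrow> tclos R \<Gamma> \<gamma>"
| chain: "tclos R \<Gamma> \<psi> \<Longrightarrow> tclos R \<Delta> \<gamma> \<Longrightarrow> \<psi> \<in> \<Delta> \<Longrightarrow> tclos R (\<Gamma> \<union> (\<Delta> - {\<psi>})) \<gamma>"

definition plus_rel :: "'f crel \<Rightarrow> 'f \<Rightarrow> 'f crel" where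
  "plus_rel R \<phi> = tclos (\<lambda>\<Gamma> \<gamma>. R \<Gamma> \<gamma> \<or> (\<Gamma> = {} \<and> \<gamma> = \<phi>))"

definition cut_prop :: "'f crel \<Rightarrow> bool" where
  "cut_prop R \<longleftrightarrow> (\<forall>\<phi> \<Gamma> \<Delta> \<gamma>. finite \<Gamma> \<longrightarrow> finite \<Delta> \<longrightarrow>
      R \<Gamma> \<phi> \<longrightarrow> plus_rel R \<phi> \<Delta> \<gamma> \<longrightarrow> R (\<Gamma> \<union> \<Delta>) \<gamma>)"

definition pointed :: "('f set \<Rightarrow> 'f set) \<Rightarrow> bool" where
  "pointed hat \<longleftrightarrow> (\<forall>\<Gamma> \<Delta>. finite \<Gamma> \<longrightarrow> finite \<Delta> \<longrightarrow> hat (\<Gamma> \<union> \<Delta>) = hat \<Gamma> \<union> hat \<Delta>)"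

definition setting :: "'f crel \<Rightarrow> ('f \<Rightarrow> 'f set) \<Rightarrow> ('f set \<Rightarrow> 'f set) \<Rightarrow> bool" where
  "setting R ov hat \<longleftrightarrow> (\<forall>\<Gamma> \<gamma>. R \<Gamma> \<gamma> \<longrightarrow> finite \<Gamma>) \<and> hat {} = {} \<and>
      (\<forall>\<Gamma>. finite \<Gamma> \<longrightarrow> finite (hat \<Gamma>))"

definition Arg :: "'f crel \<Rightarrow> 'f set \<Rightarrow> 'f arg set" where
  "Arg R S = {(\<Gamma>, \<gamma>). finite \<Gamma> \<and> \<Gamma> \<subseteq> S \<and> R \<Gamma> \<gamma>}"

definition attacks :: "('f \<Rightarrow> 'f set) \<Rightarrow> ('f set \<Rightarrow> 'f set) \<Rightarrow> 'f arg \<Rightarrow> 'f arg \<Rightarrow> bool" where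
  "attacks ov hat a b \<longleftrightarrow> (\<exists>\<psi>\<in>hat (fst b). snd a \<in> ov \<psi>)"

definition conflict_free :: "('a \<Rightarrow> 'a \<Rightarrow> bool) \<Rightarrow> 'a set \<Rightarrow> bool" where
  "conflict_free att E \<longleftrightarrow> (\<forall>a\<in>E. \<forall>b\<in>E. \<not> att a b)"

definition defends :: "'a set \<Rightarrow> ('a \<Rightarrow> 'a \<Rightarrow> bool) \<Rightarrow> 'a set \<Rightarrow> 'a \<Rightarrow> bool" where
  "defends A att E a \<longleftrightarrow> (\<forall>b\<in>A. att b a \<longrightarrow> (\<exists>c\<in>E. att c b))"

definition complete_ext :: "'a set \<Rightarrow> ('a \<Rightarrow> 'a \<Rightarrow> bool) \<Rightarrow> 'a set \<Rightarrow> bool" where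
  "complete_ext A att E \<longleftrightarrow> E \<subseteq> A \<and> conflict_free att E \<and>
     (\<forall>a\<in>E. defends A att E a) \<and> (\<forall>a\<in>A. defends A att E a \<longrightarrow> a \<in> E)"

definition grounded :: "'a set \<Rightarrow> ('a \<Rightarrow> 'a \<Rightarrow> bool) \<Rightarrow> 'a set" where
  "grounded A att = (THE E. complete_ext A att E \<and> (\<forall>E'. complete_ext A att E' \<longrightarrow> E \<subseteq> E'))"

definition Grd :: "'f crel \<Rightarrow> ('f \<Rightarrow> 'f set) \<Rightarrow> ('f set \<Rightarrow> 'f set) \<Rightarrow> 'f set \<Rightarrow> 'f arg set" where
  "Grd R ov hat S = grounded (Arg R S) (attacks ov hat)"

definition grd_entails :: "'f crel \<Rightarrow> ('f \<Rightarrow> 'f set) \<Rightarrow> ('f set \<Rightarrow> 'f set) \<Rightarrow> 'f set \<Rightarrow> 'f \<Rightarrow> bool" where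
  "grd_entails R ov hat S \<phi> \<longleftrightarrow> (\<exists>a\<in>Grd R ov hat S. snd a = \<phi>)"

end

theory Submission
  imports Defs
begin

definition charF :: "'a set \<Rightarrow> ('a \<Rightarrow> 'a \<Rightarrow> bool) \<Rightarrow> 'a set \<Rightarrow> 'a set" where
  "charF A att E = {a\<in>A. defends A att E a}"

lemma charF_mono: "mono (charF A att)"
  unfolding mono_def charF_def defends_def by blast

lemma lfp_fix: "lfp (charF A att) = charF A att (lfp (charF A att))"
  using lfp_unfold[OF charF_mono] .

lemma lfp_mem: "x \<in> lfp (charF A att) \<Longrightarrow> x \<in> A \<and> defends A att (lfp (charF A att)) x"
proof -
  assume "x \<in> lfp (charF A att)"
  hence "x \<in> charF A att (lfp (charF A att))" by (subst (asm) lfp_fix)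
  thus ?thesis unfolding charF_def by blast
qed

lemma lfp_clo: "x \<in> A \<Longrightarrow> defends A att (lfp (charF A att)) x \<Longrightarrow> x \<in> lfp (charF A att)"
proof -
  assume "x \<in> A" "defends A att (lfp (charF A att)) x"
  hence "x \<in> charF A att (lfp (charF A att))" unfolding charF_def by blast
  thus ?thesis by (subst lfp_fix)
qed

lemma lfp_memA: "x \<in> lfp (charF A att) \<Longrightarrow> x \<in> A"
  using lfp_mem by (rule conjunct1)
lemma lfp_memD: "x \<in> lfp (charF A att) \<Longrightarrow> defends A att (lfp (charF A att)) x"
  using lfp_mem by (rule conjunct2)
lemma lfp_cf: "conflict_free att (lfp (charF A att))"
proof -
  define L where "L = lfp (charF A att)"
  define K where "K = {a. \<forall>b\<in>L. \<not> att b a \<and> \<not> att a b}"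
  have "L \<subseteq> K" unfolding L_def
  proof (rule lfp_induct[OF charF_mono])
    show "charF A att (inf (lfp (charF A att)) K) \<subseteq> K"
    proof
      fix a assume a: "a \<in> charF A att (inf (lfp (charF A att)) K)"
      hence aA: "a \<in> A" and ad: "defends A att (L \<inter> K) a" by (simp_all add: charF_def L_def)
      have "\<not> att b a" if bL: "b \<in> L" for b
      proof
        assume ba: "att b a"
        have "b \<in> A" using bL unfolding L_def by (rule lfp_memA)
        then obtain c where c: "c \<in> L \<inter> K" "att c b" using ad ba unfolding defends_def by blast
        hence "\<forall>b\<in>L. \<not> att c b" unfolding K_def by blast
        thus False using bL c by blast
      qed
      moreover have "\<not> att a b" if bL: "b \<in> L" for b
      proof
        assume ab: "att a b"
        have "defends A att L b" using bL unfolding L_def by (rule lfp_memD)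
        then obtain c where c: "c \<in> L" "att c a" using ab aA unfolding defends_def by blast
        have "c \<in> A" using c(1) unfolding L_def by (rule lfp_memA)
        then obtain d where d: "d \<in> L \<inter> K" "att d c" using ad c unfolding defends_def by blast
        hence "\<forall>b\<in>L. \<not> att d b" unfolding K_def by blast
        thus False using c d by blast
      qed
      ultimately show "a \<in> K" unfolding K_def by blast
    qed
  qed
  thus ?thesis unfolding conflict_free_def K_def L_def by blast
qed

lemma lfp_complete: "complete_ext A att (lfp (charF A att))"
proof -
  have "lfp (charF A att) \<subseteq> A" using lfp_memA by (rule subsetI)
  moreover have "\<forall>a\<in>lfp (charF A att). defends A att (lfp (charF A att)) a"
    using lfp_memD by (rule ballI)
  moreover have "\<forall>a\<in>A. defends A att (lfp (charF A att)) a \<longrightarrow> a \<in> lfp (charF A att)"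
    using lfp_clo by (intro ballI impI)
  ultimately show ?thesis using lfp_cf unfolding complete_ext_def by (intro conjI)
qed

lemma lfp_least: "complete_ext A att E \<Longrightarrow> lfp (charF A att) \<subseteq> E"
  by (rule lfp_lowerbound) (auto simp: complete_ext_def charF_def)

lemma grounded_eq: "grounded A att = lfp (charF A att)"
  unfolding grounded_def
proof (rule the_equality)
  show "complete_ext A att (lfp (charF A att)) \<and>
    (\<forall>E'. complete_ext A att E' \<longrightarrow> lfp (charF A att) \<subseteq> E')"
    using lfp_complete lfp_least by blast
next
  fix E assume "complete_ext A att E \<and> (\<forall>E'. complete_ext A att E' \<longrightarrow> E \<subseteq> E')"
  thus "E = lfp (charF A att)" using lfp_complete[of A att] lfp_least[of A att E] by blast
qed

lemma g_sub: "grounded A att \<subseteq> A"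
  unfolding grounded_eq using lfp_memA by (rule subsetI)

lemma g_cf: "a \<in> grounded A att \<Longrightarrow> b \<in> grounded A att \<Longrightarrow> \<not> att a b"
  unfolding grounded_eq using lfp_cf[of att A, unfolded conflict_free_def] by blast

lemma g_def: "a \<in> grounded A att \<Longrightarrow> b \<in> A \<Longrightarrow> att b a \<Longrightarrow> \<exists>c\<in>grounded A att. att c b"
  unfolding grounded_eq using lfp_memD[of a A att] unfolding defends_def by blast

lemma g_closed: "a \<in> A \<Longrightarrow> defends A att (grounded A att) a \<Longrightarrow> a \<in> grounded A att"
  unfolding grounded_eq by (rule lfp_clo)

lemma g_induct: "charF A att (grounded A att \<inter> P) \<subseteq> P \<Longrightarrow> grounded A att \<subseteq> P"
  unfolding grounded_eq by (rule lfp_induct[OF charF_mono]) simp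

theorem theorem4:
  fixes R :: "'f set \<Rightarrow> 'f \<Rightarrow> bool" and ov :: "'f \<Rightarrow> 'f set" and hat :: "'f set \<Rightarrow> 'f set"
    and S :: "'f set" and \<phi> :: 'f
  assumes "setting R ov hat" and "cut_prop R" and "pointed hat"
    and "grd_entails R ov hat S \<phi>"
  shows "(\<exists>\<Phi>. (\<Phi>, \<phi>) \<in> Grd R ov hat S) \<and>
    Grd R ov hat S \<subseteq> Grd (plus_rel R \<phi>) ov hat S \<and>
    Grd (plus_rel R \<phi>) ov hat S \<inter> Arg R S = Grd R ov hat S \<and>
    (\<forall>\<Phi>. (\<Phi>, \<phi>) \<in> Grd R ov hat S \<longrightarrow>
           (\<forall>\<Gamma> \<gamma>. (\<Gamma>, \<gamma>) \<in> Grd (plus_rel R \<phi>) ov hat S - Arg R S \<longrightarrow>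
              (\<Gamma> \<union> \<Phi>, \<gamma>) \<in> Grd R ov hat S))"
proof -
  define att where "att = attacks ov hat"
  define A where "A = Arg R S"
  define Ap where "Ap = Arg (plus_rel R \<phi>) S"
  define G where "G = grounded A att"
  define Gp where "Gp = grounded Ap att"
  have GG: "Grd R ov hat S = G" and GGp: "Grd (plus_rel R \<phi>) ov hat S = Gp"
    by (simp_all add: Grd_def G_def Gp_def A_def Ap_def att_def)
  have attI: "att c b" if "\<psi> \<in> hat (fst b)" "snd c \<in> ov \<psi>" for c b \<psi>
    unfolding att_def attacks_def using that by blast
  have attE: "\<exists>\<psi>\<in>hat (fst b). snd c \<in> ov \<psi>" if "att c b" for c b
    using that unfolding att_def attacks_def by blast
  have RP: "\<And>\<Gamma> \<gamma>. R \<Gamma> \<gamma> \<Longrightarrow> plus_rel R \<phi> \<Gamma> \<gamma>"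
    unfolding plus_rel_def by (rule tclos.base) simp
  have AAp: "x \<in> Ap" if "x \<in> A" for x using that RP by (auto simp: Arg_def A_def Ap_def)
  have hatU: "\<And>\<Gamma> \<Delta>. finite \<Gamma> \<Longrightarrow> finite \<Delta> \<Longrightarrow> hat (\<Gamma> \<union> \<Delta>) = hat \<Gamma> \<union> hat \<Delta>"
    using assms(3) by (simp add: pointed_def)
  have finA: "finite \<Gamma>" if "(\<Gamma>, \<gamma>) \<in> A" for \<Gamma> \<gamma> using that by (simp add: A_def Arg_def)
  have finAp: "finite \<Gamma>" if "(\<Gamma>, \<gamma>) \<in> Ap" for \<Gamma> \<gamma> using that by (simp add: Ap_def Arg_def)
  have cutA: "(\<Gamma> \<union> \<Phi>, \<gamma>) \<in> A" if "(\<Phi>, \<phi>) \<in> A" "(\<Gamma>, \<gamma>) \<in> Ap" for \<Phi> \<Gamma> \<gamma>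
  proof -
    from that have "finite \<Phi>" "\<Phi> \<subseteq> S" "R \<Phi> \<phi>" "finite \<Gamma>" "\<Gamma> \<subseteq> S" "plus_rel R \<phi> \<Gamma> \<gamma>"
      by (simp_all add: Arg_def A_def Ap_def)
    moreover from this have "R (\<Phi> \<union> \<Gamma>) \<gamma>" using assms(2) unfolding cut_prop_def by blast
    ultimately show ?thesis by (simp add: Arg_def A_def Un_commute)
  qed
  have GA: "x \<in> A" if "x \<in> G" for x using g_sub that unfolding G_def by (rule subsetD)
  obtain a where a: "a \<in> G" "snd a = \<phi>" using assms(4) unfolding grd_entails_def GG by blast
  have P1: "\<exists>\<Phi>. (\<Phi>, \<phi>) \<in> G" using a by (metis prod.collapse)
  have P2: "G \<subseteq> Gp" if \<Phi>: "(\<Phi>, \<phi>) \<in> G" for \<Phi>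
  proof -
    have \<Phi>A: "(\<Phi>, \<phi>) \<in> A" using \<Phi> by (rule GA)
    show ?thesis unfolding G_def
    proof (rule g_induct)
      show "charF A att (grounded A att \<inter> Gp) \<subseteq> Gp"
      proof
        fix x assume "x \<in> charF A att (grounded A att \<inter> Gp)"
        hence xA: "x \<in> A" and xd: "defends A att (G \<inter> Gp) x"
          by (simp_all add: charF_def G_def)
        have "defends Ap att Gp x"
          unfolding defends_def
        proof (intro ballI impI)
          fix b assume bAp: "b \<in> Ap" and bx: "att b x"
          obtain \<Gamma>b \<gamma>b where bb: "b = (\<Gamma>b, \<gamma>b)" by (cases b)
          have b'A: "(\<Gamma>b \<union> \<Phi>, \<gamma>b) \<in> A" using \<Phi>A bAp[unfolded bb] by (rule cutA)
          from attE[OF bx] obtain \<psi>0 where "\<psi>0 \<in> hat (fst x)" "snd b \<in> ov \<psi>0" by blast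
          hence "att (\<Gamma>b \<union> \<Phi>, \<gamma>b) x" using bb attI by simp
          then obtain c where c: "c \<in> G" "c \<in> Gp" "att c (\<Gamma>b \<union> \<Phi>, \<gamma>b)"
            using xd b'A unfolding defends_def by blast
          have fb: "finite \<Gamma>b" "finite \<Phi>" using finAp bAp[unfolded bb] finA \<Phi>A by blast+
          from attE[OF c(3)] obtain \<psi> where \<psi>: "\<psi> \<in> hat \<Gamma>b \<union> hat \<Phi>" "snd c \<in> ov \<psi>"
            using hatU[OF fb] by auto
          show "\<exists>c\<in>Gp. att c b"
          proof (cases "\<psi> \<in> hat \<Gamma>b")
            case True
            hence "att c b" using attI[of \<psi> b c] \<psi>(2) bb by simp
            thus ?thesis using c(2) by blast
          next
            case False
            hence "\<psi> \<in> hat (fst (\<Phi>, \<phi>))" using \<psi>(1) by simp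
            hence "att c (\<Phi>, \<phi>)" using \<psi>(2) by (rule attI)
            moreover have "\<not> att c (\<Phi>, \<phi>)" using c(1) \<Phi> unfolding G_def by (rule g_cf)
            ultimately show ?thesis by contradiction
          qed
        qed
        thus "x \<in> Gp" unfolding Gp_def using AAp[OF xA] by (intro g_closed) (simp_all add: Gp_def)
      qed
    qed
  qed
  have P4: "(\<Gamma> \<union> \<Phi>, \<gamma>) \<in> G" if \<Phi>: "(\<Phi>, \<phi>) \<in> G" and g: "(\<Gamma>, \<gamma>) \<in> Gp" for \<Phi> \<Gamma> \<gamma>
  proof -
    have \<Phi>A: "(\<Phi>, \<phi>) \<in> A" using \<Phi> by (rule GA)
    define P where "P = {(\<Gamma>, \<gamma>). (\<Gamma> \<union> \<Phi>, \<gamma>) \<in> G}"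
    have "Gp \<subseteq> P" unfolding Gp_def
    proof (rule g_induct)
      show "charF Ap att (grounded Ap att \<inter> P) \<subseteq> P"
      proof
        fix x assume "x \<in> charF Ap att (grounded Ap att \<inter> P)"
        hence xA: "x \<in> Ap" and xd: "defends Ap att (Gp \<inter> P) x"
          by (simp_all add: charF_def Gp_def)
        obtain \<Gamma>x \<gamma>x where xx: "x = (\<Gamma>x, \<gamma>x)" by (cases x)
        have x'A: "(\<Gamma>x \<union> \<Phi>, \<gamma>x) \<in> A" using \<Phi>A xA[unfolded xx] by (rule cutA)
        have fx: "finite \<Gamma>x" "finite \<Phi>" using finAp xA[unfolded xx] finA \<Phi>A by blast+
        have "defends A att G (\<Gamma>x \<union> \<Phi>, \<gamma>x)"
          unfolding defends_def
        proof (intro ballI impI)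
          fix b assume bA: "b \<in> A" and bx: "att b (\<Gamma>x \<union> \<Phi>, \<gamma>x)"
          from attE[OF bx] obtain \<psi> where \<psi>: "\<psi> \<in> hat \<Gamma>x \<union> hat \<Phi>" "snd b \<in> ov \<psi>"
            using hatU[OF fx] by auto
          show "\<exists>c\<in>G. att c b"
          proof (cases "\<psi> \<in> hat \<Gamma>x")
            case True
            hence "att b x" using attI[of \<psi> x b] \<psi>(2) xx by simp
            then obtain c where c: "c \<in> Gp" "c \<in> P" "att c b"
              using xd AAp[OF bA] unfolding defends_def by blast
            obtain \<Gamma>c \<gamma>c where cc: "c = (\<Gamma>c, \<gamma>c)" by (cases c)
            have "(\<Gamma>c \<union> \<Phi>, \<gamma>c) \<in> G" using c(2) cc by (simp add: P_def)
            moreover from attE[OF c(3)] obtain \<chi> where "\<chi> \<in> hat (fst b)" "snd c \<in> ov \<chi>" by blast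
            hence "att (\<Gamma>c \<union> \<Phi>, \<gamma>c) b" using attI cc by simp
            ultimately show ?thesis by blast
          next
            case False
            hence "\<psi> \<in> hat (fst (\<Phi>, \<phi>))" using \<psi>(1) by simp
            hence "att b (\<Phi>, \<phi>)" using \<psi>(2) by (rule attI)
            thus ?thesis using g_def[of "(\<Phi>, \<phi>)" A att b] \<Phi> bA unfolding G_def by simp
          qed
        qed
        hence "(\<Gamma>x \<union> \<Phi>, \<gamma>x) \<in> G" unfolding G_def using x'A by (intro g_closed) (simp_all add: G_def)
        thus "x \<in> P" using xx by (simp add: P_def)
      qed
    qed
    thus ?thesis using g by (auto simp: P_def)
  qed
  obtain \<Phi> where \<Phi>: "(\<Phi>, \<phi>) \<in> G" using P1 by blast
  have P3: "Gp \<inter> A = G"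
  proof
    show "G \<subseteq> Gp \<inter> A" using P2[OF \<Phi>] GA by blast
  next
    show "Gp \<inter> A \<subseteq> G"
    proof
      fix x assume x: "x \<in> Gp \<inter> A"
      obtain \<Gamma>x \<gamma>x where xx: "x = (\<Gamma>x, \<gamma>x)" by (cases x)
      have in1: "(\<Gamma>x \<union> \<Phi>, \<gamma>x) \<in> G" using P4[OF \<Phi>] x xx by simp
      have fx: "finite \<Gamma>x" "finite \<Phi>" using x xx finA GA[OF \<Phi>] by blast+
      have "defends A att G x"
        unfolding defends_def
      proof (intro ballI impI)
        fix b assume bA: "b \<in> A" and bx: "att b x"
        from attE[OF bx] obtain \<psi> where \<psi>: "\<psi> \<in> hat \<Gamma>x" "snd b \<in> ov \<psi>" using xx by auto
        hence "\<psi> \<in> hat (fst (\<Gamma>x \<union> \<Phi>, \<gamma>x))" using hatU[OF fx] by simp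
        hence "att b (\<Gamma>x \<union> \<Phi>, \<gamma>x)" using \<psi>(2) by (rule attI)
        thus "\<exists>c\<in>G. att c b" using g_def[of "(\<Gamma>x \<union> \<Phi>, \<gamma>x)" A att b] in1 bA unfolding G_def by simp
      qed
      thus "x \<in> G" unfolding G_def using x by (intro g_closed) (simp_all add: G_def)
    qed
  qed
  have P4': "\<forall>\<Phi>. (\<Phi>, \<phi>) \<in> G \<longrightarrow> (\<forall>\<Gamma> \<gamma>. (\<Gamma>, \<gamma>) \<in> Gp - A \<longrightarrow> (\<Gamma> \<union> \<Phi>, \<gamma>) \<in> G)"
    using P4 by blast
  show ?thesis unfolding GG GGp A_def[symmetric] using P1 P2[OF \<Phi>] P3 P4' by (intro conjI)
qed

end
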